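(* Let $\{x_n\}\subset X$, $\{y_n\}\subset X^{\ast}$ form a cross-frame in the Banach space $X$, and suppose $\{x_n\}$ is not a basis of $X$. Let $\{\lambda_n\}$ be a separated sequence of real numbers, i.e. there is $\delta>0$ with $|\lambda_n-\lambda_m|>\delta$ for all $n\neq m$. Then there is no one-parameter group of operators $\{T_t\}_{t\in\mathbb R}$ on $X$ such that $T_tx_n=e^{i\lambda_n t}x_n$ for all $n$ and all $t\in\mathbb R$.
   Context: $X$ is a (complex) Banach space, $X^{\ast}$ its dual, and $(x,y)$ denotes the value of $y\in X^{\ast}$ at $x\in X$. $X_d$ is a Banach space of scalar sequences $a=\{a_n\}$ in which the unit vectors $\varepsilon_n=\{\delta_{nj}\}_j$ form a basis; its dual $X_d^{\ast}$ is identified with a space of sequences via $b\mapsto\{b(\varepsilon_n)\}$, and it is assumed that the coordinate functionals $\{\varepsilon_n^{\ast}\}$ form a basis of $X_d^{\ast}$. A sequence $\{y_n\}\subset X^{\ast}$ is a frame if there are $A,B>0$ such that $\{(x,y_n)\}\in X_d$ and $A\|x\|_X\le \|\{(x,y_n)\}\|_{X_d}\le B\|x\|_X$ for all $x\in X$. A sequence $\{x_n\}\subset X$ (with $x_n\neq0$) is a co-frame if $\{(x_n,y)\}\in X_d^{\ast}$ for all $y\in X^{\ast}$ and there are $\tilde A,\tilde B>0$ with $\tilde A\|y\|_{X^{\ast}}\le \|\{(x_n,y)\}\|_{X_d^{\ast}}\le \tilde B\|y\|_{X^{\ast}}$ for all $y\in X^{\ast}$. A co-frame $\{x_n\}$ and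 a frame $\{y_n\}$ form a cross-frame if $x=\sum_n (x,y_n)x_n$ for all $x\in X$ and $y=\sum_n (x_n,y)y_n$ for all $y\in X^{\ast}$. A one-parameter group of operators on $X$ is a family $\{T_t\}_{t\in\mathbb R}$ of bounded linear operators on $X$ with $T_{t+s}=T_tT_s$ for all $t,s$ and $T_0=I_X$. *)

theory Defs
  imports "HOL-Analysis.Analysis" "HOL-Library.Function_Algebras"
begin

text \<open>A complex Banach space is modelled as a
real Banach space (type class banach) together with a complex scalar multiplication sm
extending the real one and compatible with the norm.\<close>

definition cscalar :: "(complex \<Rightarrow> 'a::banach \<Rightarrow> 'a) \<Rightarrow> bool" where
  "cscalar sm \<longleftrightarrow>
     (\<forall>r x. sm (complex_of_real r) x = r *\<^sub>R x) \<and>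
     (\<forall>a b x. sm (a * b) x = sm a (sm b x)) \<and>
     (\<forall>a b x. sm (a + b) x = sm a x + sm b x) \<and>
     (\<forall>a x y. sm a (x + y) = sm a x + sm a y) \<and>
     (\<forall>a x. norm (sm a x) = cmod a * norm x)"

definition cdual :: "(complex \<Rightarrow> 'a::banach \<Rightarrow> 'a) \<Rightarrow> ('a \<Rightarrow> complex) \<Rightarrow> bool" where
  "cdual sm f \<longleftrightarrow> bounded_linear f \<and> (\<forall>c z. f (sm c z) = c * f z)"

definition cbounded_op :: "(complex \<Rightarrow> 'a::banach \<Rightarrow> 'a) \<Rightarrow> ('a \<Rightarrow> 'a) \<Rightarrow> bool" where
  "cbounded_op sm T \<longleftrightarrow> bounded_linear T \<and> (\<forall>c z. T (sm c z) = sm c (T z))"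

definition cbasis :: "(complex \<Rightarrow> 'a::banach \<Rightarrow> 'a) \<Rightarrow> (nat \<Rightarrow> 'a) \<Rightarrow> bool" where
  "cbasis sm x \<longleftrightarrow> (\<forall>z. \<exists>!c. (\<lambda>n. sm (c n) (x n)) sums z)"

definition unitv :: "nat \<Rightarrow> nat \<Rightarrow> complex" where
  "unitv n = (\<lambda>j. if j = n then 1 else 0)"

text \<open>X_d is given by a set S of scalar sequences and a norm N on it.\<close>
definition seq_space :: "(nat \<Rightarrow> complex) set \<Rightarrow> ((nat \<Rightarrow> complex) \<Rightarrow> real) \<Rightarrow> bool" where
  "seq_space S N \<longleftrightarrow>
     0 \<in> S \<and> (\<forall>a\<in>S. \<forall>b\<in>S. a + b \<in> S) \<and> (\<forall>c. \<forall>a\<in>S. (\<lambda>n. c * a n) \<in> S) \<and>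
     (\<forall>a\<in>S. 0 \<le> N a) \<and> (\<forall>a\<in>S. N a = 0 \<longleftrightarrow> a = 0) \<and>
     (\<forall>c. \<forall>a\<in>S. N (\<lambda>n. c * a n) = cmod c * N a) \<and>
     (\<forall>a\<in>S. \<forall>b\<in>S. N (a + b) \<le> N a + N b) \<and>
     (\<forall>s. (\<forall>n. s n \<in> S) \<and> (\<forall>e>0. \<exists>M. \<forall>m\<ge>M. \<forall>n\<ge>M. N (s m - s n) < e)
          \<longrightarrow> (\<exists>a\<in>S. (\<lambda>n. N (s n - a)) \<longlonglongrightarrow> 0)) \<and>
     (\<forall>n. unitv n \<in> S)"

definition unit_basis :: "(nat \<Rightarrow> complex) set \<Rightarrow> ((nat \<Rightarrow> complex) \<Rightarrow> real) \<Rightarrow> bool" where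
  "unit_basis S N \<longleftrightarrow>
     (\<forall>a\<in>S. \<exists>!c. (\<lambda>n. N (a - (\<Sum>k<n. (\<lambda>j. c k * unitv k j)))) \<longlonglongrightarrow> 0)"

definition seq_func :: "(nat \<Rightarrow> complex) set \<Rightarrow> ((nat \<Rightarrow> complex) \<Rightarrow> real) \<Rightarrow> ((nat \<Rightarrow> complex) \<Rightarrow> complex) \<Rightarrow> bool" where
  "seq_func S N b \<longleftrightarrow>
     (\<forall>a\<in>S. \<forall>a'\<in>S. b (a + a') = b a + b a') \<and>
     (\<forall>c. \<forall>a\<in>S. b (\<lambda>n. c * a n) = c * b a) \<and>
     (\<exists>C. \<forall>a\<in>S. cmod (b a) \<le> C * N a)"

text \<open>The dual X_d^*, identified with sequences via b \<mapsto> (b(e_n))_n.\<close>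
definition seq_dual :: "(nat \<Rightarrow> complex) set \<Rightarrow> ((nat \<Rightarrow> complex) \<Rightarrow> real) \<Rightarrow> (nat \<Rightarrow> complex) set" where
  "seq_dual S N = {\<beta>. \<exists>b. seq_func S N b \<and> (\<forall>n. b (unitv n) = \<beta> n)}"

definition seq_dual_fun :: "(nat \<Rightarrow> complex) set \<Rightarrow> ((nat \<Rightarrow> complex) \<Rightarrow> real) \<Rightarrow> (nat \<Rightarrow> complex) \<Rightarrow> ((nat \<Rightarrow> complex) \<Rightarrow> complex)" where
  "seq_dual_fun S N \<beta> = (SOME b. seq_func S N b \<and> (\<forall>n. b (unitv n) = \<beta> n))"

definition seq_dual_norm :: "(nat \<Rightarrow> complex) set \<Rightarrow> ((nat \<Rightarrow> complex) \<Rightarrow> real) \<Rightarrow> (nat \<Rightarrow> complex) \<Rightarrow> real" where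
  "seq_dual_norm S N \<beta> = (SUP a\<in>{a\<in>S. N a \<le> 1}. cmod (seq_dual_fun S N \<beta> a))"

text \<open>The coordinate functionals (as elements of X_d^* they are the sequences unitv n)
  form a basis of X_d^*.\<close>
definition coord_dual_basis :: "(nat \<Rightarrow> complex) set \<Rightarrow> ((nat \<Rightarrow> complex) \<Rightarrow> real) \<Rightarrow> bool" where
  "coord_dual_basis S N \<longleftrightarrow>
     (\<forall>\<beta>\<in>seq_dual S N. \<exists>!c.
        (\<lambda>n. seq_dual_norm S N (\<beta> - (\<Sum>k<n. (\<lambda>j. c k * unitv k j)))) \<longlonglongrightarrow> 0)"

definition Xd_space :: "(nat \<Rightarrow> complex) set \<Rightarrow> ((nat \<Rightarrow> complex) \<Rightarrow> real) \<Rightarrow> bool" where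
  "Xd_space S N \<longleftrightarrow> seq_space S N \<and> unit_basis S N \<and> coord_dual_basis S N"

definition is_frame :: "(complex \<Rightarrow> 'a::banach \<Rightarrow> 'a) \<Rightarrow> (nat \<Rightarrow> complex) set \<Rightarrow> ((nat \<Rightarrow> complex) \<Rightarrow> real) \<Rightarrow> (nat \<Rightarrow> 'a \<Rightarrow> complex) \<Rightarrow> bool" where
  "is_frame sm S N y \<longleftrightarrow> (\<forall>n. cdual sm (y n)) \<and>
     (\<exists>A B. A > 0 \<and> B > 0 \<and> (\<forall>z. (\<lambda>n. y n z) \<in> S \<and>
        A * norm z \<le> N (\<lambda>n. y n z) \<and> N (\<lambda>n. y n z) \<le> B * norm z))"

definition is_coframe :: "(complex \<Rightarrow> 'a::banach \<Rightarrow> 'a) \<Rightarrow> (nat \<Rightarrow> complex) set \<Rightarrow> ((nat \<Rightarrow> complex) \<Rightarrow> real) \<Rightarrow> (nat \<Rightarrow> 'a) \<Rightarrow> bool" where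
  "is_coframe sm S N x \<longleftrightarrow> (\<forall>n. x n \<noteq> 0) \<and>
     (\<exists>A B. A > 0 \<and> B > 0 \<and> (\<forall>f. cdual sm f \<longrightarrow> (\<lambda>n. f (x n)) \<in> seq_dual S N \<and>
        A * onorm f \<le> seq_dual_norm S N (\<lambda>n. f (x n)) \<and>
        seq_dual_norm S N (\<lambda>n. f (x n)) \<le> B * onorm f))"

definition is_cross_frame :: "(complex \<Rightarrow> 'a::banach \<Rightarrow> 'a) \<Rightarrow> (nat \<Rightarrow> complex) set \<Rightarrow> ((nat \<Rightarrow> complex) \<Rightarrow> real) \<Rightarrow> (nat \<Rightarrow> 'a) \<Rightarrow> (nat \<Rightarrow> 'a \<Rightarrow> complex) \<Rightarrow> bool" where
  "is_cross_frame sm S N x y \<longleftrightarrow> is_coframe sm S N x \<and> is_frame sm S N y \<and>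
     (\<forall>z. (\<lambda>n. sm (y n z) (x n)) sums z) \<and>
     (\<forall>f. cdual sm f \<longrightarrow>
        (\<lambda>n. onorm (\<lambda>z. f z - (\<Sum>k<n. f (x k) * y k z))) \<longlonglongrightarrow> 0)"

definition one_param_group :: "(complex \<Rightarrow> 'a::banach \<Rightarrow> 'a) \<Rightarrow> (real \<Rightarrow> 'a \<Rightarrow> 'a) \<Rightarrow> bool" where
  "one_param_group sm T \<longleftrightarrow> (\<forall>t. cbounded_op sm (T t)) \<and>
     (\<forall>t s. T (t + s) = T t \<circ> T s) \<and> T 0 = id"

end

theory Submission
  imports Defs
begin


lemma sm_props:
  assumes "cscalar sm"
  shows sm_real: "sm (complex_of_real r) x = r *\<^sub>R x"
    and sm_mult: "sm (a * b) x = sm a (sm b x)"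
    and sm_addl: "sm (a + b) x = sm a x + sm b x"
    and sm_addr: "sm a (x + y) = sm a x + sm a y"
    and sm_norm: "norm (sm a x) = cmod a * norm x"
  using assms unfolding cscalar_def by auto

lemma sm_decomp:
  assumes "cscalar sm"
  shows "sm a x = Re a *\<^sub>R x + Im a *\<^sub>R sm \<i> x"
proof -
  have "a = complex_of_real (Re a) + complex_of_real (Im a) * \<i>"
    by (simp add: complex_eq_iff)
  then have "sm a x = sm (complex_of_real (Re a)) x + sm (complex_of_real (Im a)) (sm \<i> x)"
    by (metis sm_addl[OF assms] sm_mult[OF assms])
  then show ?thesis using sm_real[OF assms] by simp
qed

lemma sm_diffl:
  assumes "cscalar sm"
  shows "sm (a - b) x = sm a x - sm b x"
  using sm_addl[OF assms, of "a - b" b x] by (simp add: algebra_simps)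

lemma sm_zero_left: assumes "cscalar sm" shows "sm 0 x = 0"
  using sm_real[OF assms, of 0] by simp

lemma sm_one: assumes "cscalar sm" shows "sm 1 x = x"
  using sm_real[OF assms, of 1] by simp

lemma sm_sum:
  assumes "cscalar sm"
  shows "sm a (\<Sum>n\<in>F. g n) = (\<Sum>n\<in>F. sm a (g n))"
proof -
  have "linear (sm a)"
  proof (rule linearI)
    show "sm a (b + c) = sm a b + sm a c" for b c by (rule sm_addr[OF assms])
    show "sm a (r *\<^sub>R b) = r *\<^sub>R sm a b" for r b
      by (metis sm_real[OF assms] sm_mult[OF assms] mult.commute)
  qed
  then show ?thesis by (rule linear_sum)
qed

lemma cont_sm:
  assumes "cscalar sm" and "continuous_on S g"
  shows "continuous_on S (\<lambda>u. sm (g u) v)"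
proof -
  have eq: "(\<lambda>u. sm (g u) v) = (\<lambda>u. Re (g u) *\<^sub>R v + Im (g u) *\<^sub>R sm \<i> v)"
    using sm_decomp[OF assms(1)] by blast
  show ?thesis unfolding eq by (intro continuous_intros assms(2))
qed

lemma exp_integral:
  fixes L w :: real
  assumes "0 \<le> L" "w \<noteq> 0"
  shows "((\<lambda>s. exp (\<i> * complex_of_real (w * s))) has_integral
           (exp (\<i> * complex_of_real (w * L)) - 1) / (\<i> * complex_of_real w)) {0..L}"
proof -
  define F where "F = (\<lambda>z::complex. exp (\<i> * (complex_of_real w * z)) / (\<i> * complex_of_real w))"
  have d: "(F has_field_derivative exp (\<i> * (complex_of_real w * z))) (at z)" for z
  proof -
    have "((\<lambda>z. exp (\<i> * (complex_of_real w * z))) has_field_derivative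
           exp (\<i> * (complex_of_real w * z)) * (\<i> * complex_of_real w)) (at z)"
      by (auto intro!: derivative_eq_intros simp: algebra_simps)
    from DERIV_cdivide[OF this, of "\<i> * complex_of_real w"]
    show ?thesis unfolding F_def using assms(2) by simp
  qed
  have "((\<lambda>s. F (of_real s)) has_vector_derivative exp (\<i> * complex_of_real (w * s))) (at s within {0..L})" for s
    using has_vector_derivative_real_field[OF d[of "of_real s"]] by simp
  from fundamental_theorem_of_calculus[OF assms(1) this]
  show ?thesis unfolding F_def using assms(2) by (simp add: diff_divide_distrib)
qed

lemma exp_integral_bound:
  fixes L w :: real
  assumes "w \<noteq> 0"
  shows "cmod ((exp (\<i> * complex_of_real (w * L)) - 1) / (\<i> * complex_of_real w)) \<le> 2 / \<bar>w\<bar>"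
proof -
  have "cmod (exp (\<i> * complex_of_real (w * L)) - 1) \<le> cmod (exp (\<i> * complex_of_real (w * L))) + cmod 1"
    by (rule norm_triangle_ineq4)
  also have "\<dots> = 2" by simp
  finally show ?thesis using assms by (simp add: norm_divide norm_mult divide_right_mono)
qed

lemma inv_sq_sum: "(\<Sum>k=1..R. 1 / (real k)^2) \<le> 2 - 1 / real (max 1 R)"
proof (induction R)
  case 0 then show ?case by simp
next
  case (Suc R)
  show ?case
  proof (cases "R = 0")
    case True then show ?thesis by simp
  next
    case False
    then have R1: "real R \<ge> 1" by simp
    have "(\<Sum>k=1..Suc R. 1 / (real k)^2) = (\<Sum>k=1..R. 1 / (real k)^2) + 1 / (real R + 1)^2"
      by simp
    also have "\<dots> \<le> 2 - 1 / real R + 1 / (real R + 1)^2"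
      using Suc False by (simp add: max_def)
    also have "\<dots> \<le> 2 - 1 / (real R + 1)"
    proof -
      have "1 / (real R + 1)^2 \<le> 1 / (real R * (real R + 1))"
        using R1 by (intro divide_left_mono) (auto simp: power2_eq_square)
      also have "\<dots> = 1 / real R - 1 / (real R + 1)"
        using R1 by (simp add: field_simps)
      finally have "1 / (real R + 1)^2 \<le> 1 / real R - 1 / (real R + 1)" .
      then show ?thesis by simp
    qed
    finally show ?thesis by (simp add: add.commute)
  qed
qed


lemma sep_sum:
  fixes mu :: "nat \<Rightarrow> real"
  assumes "d > 0" "finite F" "\<And>n. n \<in> F \<Longrightarrow> mu n \<ge> d"
    and "\<And>n n'. n \<in> F \<Longrightarrow> n' \<in> F \<Longrightarrow> n \<noteq> n' \<Longrightarrow> \<bar>mu n - mu n'\<bar> \<ge> d"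
  shows "(\<Sum>n\<in>F. 1 / (mu n)^2) \<le> 2 / d^2"
proof -
  define j where "j n = nat \<lfloor>mu n / d\<rfloor>" for n
  have j1: "j n \<ge> 1" if "n \<in> F" for n
  proof -
    have "mu n / d \<ge> 1" using assms(1) assms(3)[OF that] by simp
    then show ?thesis unfolding j_def by linarith
  qed
  have fl1: "\<lfloor>mu n / d\<rfloor> \<ge> 1" if "n \<in> F" for n
  proof -
    have "mu n / d \<ge> 1" using assms(1) assms(3)[OF that] by simp
    then show ?thesis by linarith
  qed
  have jle: "real (j n) * d \<le> mu n" if "n \<in> F" for n
  proof -
    have "real (j n) = of_int \<lfloor>mu n / d\<rfloor>" unfolding j_def using fl1[OF that] by simp
    also have "\<dots> \<le> mu n / d" by (rule of_int_floor_le)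
    finally have "real (j n) \<le> mu n / d" .
    then show ?thesis using assms(1) by (simp add: field_simps)
  qed
  have inj: "inj_on j F"
  proof (rule inj_onI)
    fix n n' assume nF: "n \<in> F" "n' \<in> F" "j n = j n'"
    show "n = n'"
    proof (rule ccontr)
      assume "n \<noteq> n'"
      have f: "\<lfloor>mu n / d\<rfloor> = \<lfloor>mu n' / d\<rfloor>"
        using nF fl1[OF nF(1)] fl1[OF nF(2)] unfolding j_def by (simp add: eq_nat_nat_iff)
      have "\<bar>mu n / d - mu n' / d\<bar> < 1" using f by linarith
      then have "\<bar>mu n - mu n'\<bar> < d" using assms(1)
        by (simp add: diff_divide_distrib[symmetric] abs_divide)
      with assms(4)[OF nF(1,2) \<open>n \<noteq> n'\<close>] show False by simp
    qed
  qed
  have "(\<Sum>n\<in>F. 1 / (mu n)^2) \<le> (\<Sum>n\<in>F. (1 / d^2) * (1 / (real (j n))^2))"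
  proof (rule sum_mono)
    fix n assume nF: "n \<in> F"
    have p: "0 < real (j n) * d" using j1[OF nF] assms(1) by simp
    have sq: "(real (j n) * d)^2 \<le> (mu n)^2" using jle[OF nF] p by (intro power_mono) auto
    have "j n > 0" using j1[OF nF] by simp
    moreover have "mu n > 0" using assms(1) assms(3)[OF nF] by simp
    ultimately have "1 / (mu n)^2 \<le> 1 / (real (j n) * d)^2" using p
      using \<open>j n > 0\<close> sq by (intro divide_left_mono) (auto intro!: mult_pos_pos)
    then show "1 / (mu n)^2 \<le> (1 / d^2) * (1 / (real (j n))^2)"
      by (simp add: power_mult_distrib mult.commute)
  qed
  also have "\<dots> = (1 / d^2) * (\<Sum>k\<in>j ` F. 1 / (real k)^2)"
    by (simp add: sum_distrib_left sum.reindex[OF inj])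
  also have "(\<Sum>k\<in>j ` F. 1 / (real k)^2) \<le> (\<Sum>k=1..Max (j ` F \<union> {1}). 1 / (real k)^2)"
  proof (rule sum_mono2)
    show "j ` F \<subseteq> {1..Max (j ` F \<union> {1})}"
      using j1 assms(2) by (auto intro: Max_ge)
  qed auto
  also have "\<dots> \<le> 2"
  proof -
    have "0 \<le> 1 / real (max 1 (Max (j ` F \<union> {1})))" by simp
    then show ?thesis using inv_sq_sum[of "Max (j ` F \<union> {1})"] by linarith
  qed
  finally show ?thesis using assms(1) by (simp add: divide_right_mono)
qed

lemma baire_cover:
  fixes E :: "nat \<Rightarrow> real set"
  assumes cl: "\<And>K. closed (E K)" and cov: "\<And>u. \<exists>K. u \<in> E K"
  shows "\<exists>K c r. r > 0 \<and> ball c r \<subseteq> E K"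
proof (rule ccontr)
  assume H: "\<not> ?thesis"
  have int: "interior (E K) = {}" for K
  proof -
    have "\<not> (\<exists>c. c \<in> interior (E K))"
    proof
      assume "\<exists>c. c \<in> interior (E K)"
      then obtain c where "c \<in> interior (E K)" by blast
      then obtain r where "r > 0" "ball c r \<subseteq> E K" by (auto simp: mem_interior)
      with H show False by blast
    qed
    then show ?thesis by blast
  qed
  have "(UNIV::real set) \<subseteq> closure (\<Inter> (range (\<lambda>K. - E K)))"
  proof (rule Baire)
    fix T assume "T \<in> range (\<lambda>K. - E K)"
    then obtain K where T: "T = - E K" by auto
    show "openin (top_of_set UNIV) T \<and> UNIV \<subseteq> closure T"
      unfolding T using cl[of K] int[of K]
      by (simp add: closure_complement open_Compl)
  qed auto
  moreover have "\<Inter> (range (\<lambda>K. - E K)) = {}" using cov by auto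
  ultimately show False by simp
qed



lemma local_bound:
  fixes T :: "real \<Rightarrow> 'a::real_normed_vector \<Rightarrow> 'a"
  assumes add: "\<And>t s. T (t + s) = T t \<circ> T s" and T0: "T 0 = id"
    and bl: "\<And>t. bounded_linear (T t)"
    and r: "r > 0" and bd: "\<And>u z. u \<in> ball c r \<Longrightarrow> norm (T u z) \<le> K * norm z"
  shows "\<exists>M. \<forall>u z. \<bar>u\<bar> \<le> L \<longrightarrow> norm (T u z) \<le> M * norm z"
proof -
  define Om where "Om = onorm (T (-c))"
  define Q where "Q = max 1 (max 0 K * Om)"
  have Om0: "Om \<ge> 0" unfolding Om_def by (rule onorm_pos_le[OF bl])
  have Q1: "Q \<ge> 1" unfolding Q_def by simp
  have small: "norm (T s z) \<le> Q * norm z" if "\<bar>s\<bar> < r" for s z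
  proof -
    have "T s = T (c + s) \<circ> T (-c)" using add[of "c+s" "-c"] by simp
    then have "norm (T s z) = norm (T (c+s) (T (-c) z))" by simp
    also have "\<dots> \<le> K * norm (T (-c) z)" using bd[of "c+s"] that by (auto simp: dist_norm)
    also have "\<dots> \<le> max 0 K * norm (T (-c) z)" by (simp add: mult_right_mono)
    also have "\<dots> \<le> max 0 K * (Om * norm z)"
      using onorm[OF bl, of "-c" z] unfolding Om_def by (simp add: mult_left_mono)
    also have "\<dots> \<le> Q * norm z" unfolding Q_def mult.assoc[symmetric]
      by (intro mult_right_mono) auto
    finally show ?thesis .
  qed
  have pow: "norm (T (real j * v) z) \<le> Q ^ j * norm z" if "\<bar>v\<bar> < r" for j v z
  proof (induction j arbitrary: z)
    case 0 then show ?case using T0 by simp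
  next
    case (Suc j)
    have "T (real (Suc j) * v) = T v \<circ> T (real j * v)"
      using add[of v "real j * v"] by (simp add: algebra_simps)
    then have "norm (T (real (Suc j) * v) z) = norm (T v (T (real j * v) z))" by simp
    also have "\<dots> \<le> Q * norm (T (real j * v) z)" by (rule small[OF that])
    also have "\<dots> \<le> Q * (Q ^ j * norm z)" using Suc Q1 by (intro mult_left_mono) auto
    finally show ?case by simp
  qed
  define n where "n = nat \<lceil>\<bar>L\<bar> / r\<rceil> + 1"
  have npos: "real n \<ge> 1" unfolding n_def by simp
  have nr: "\<bar>L\<bar> / real n < r"
  proof -
    have "\<bar>L\<bar> / r < real n" unfolding n_def using real_nat_ceiling_ge[of "\<bar>L\<bar> / r"] by simp
    then have "\<bar>L\<bar> < real n * r" using r by (simp add: field_simps)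
    then show ?thesis using npos by (simp add: field_simps)
  qed
  show ?thesis
  proof (rule exI[of _ "Q ^ n"], intro allI impI)
    fix u z assume uL: "\<bar>u\<bar> \<le> L"
    define v where "v = u / real n"
    have "\<bar>v\<bar> \<le> \<bar>L\<bar> / real n" unfolding v_def using uL npos
      by (simp add: abs_divide divide_right_mono)
    then have vr: "\<bar>v\<bar> < r" using nr by linarith
    have "u = real n * v" unfolding v_def using npos by simp
    then show "norm (T u z) \<le> Q ^ n * norm z" using pow[OF vr, of n z] by simp
  qed
qed

lemma core:
  fixes a :: "nat \<Rightarrow> complex" and lam :: "nat \<Rightarrow> real"
  assumes L: "L > 0" and dl: "dl > 0" and sep: "\<And>n m. n \<noteq> m \<Longrightarrow> \<bar>lam n - lam m\<bar> > dl"
    and A: "\<And>n. cmod (a n) \<le> A" and mN: "m < N"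
    and Phi: "\<And>u. 0 \<le> u \<Longrightarrow> u \<le> 2 * L \<Longrightarrow>
       cmod (\<Sum>n<N. a n * exp (\<i> * complex_of_real ((lam n - lam m) * u))) \<le> B"
  shows "cmod (a m) * L^2 \<le> B * L^2 + 16 * A / dl^2"
proof -
  define w where "w n = lam n - lam m" for n
  define J where "J n = integral {0..L} (\<lambda>s. exp (\<i> * complex_of_real (w n * s)))" for n
  have Jint: "((\<lambda>s. exp (\<i> * complex_of_real (w n * s))) has_integral J n) {0..L}" for n
    unfolding J_def by (intro integrable_integral integrable_continuous_interval continuous_intros)
  have Jm: "J m = complex_of_real L"
  proof -
    have "((\<lambda>s. (1::complex)) has_integral (Henstock_Kurzweil_Integration.content {0..L} *\<^sub>R 1)) {0..L}" by blast
    moreover have "Henstock_Kurzweil_Integration.content {0..L} = L" using L by simp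
    ultimately have "((\<lambda>s. (1::complex)) has_integral complex_of_real L) {0..L}"
      by (simp add: scaleR_conv_of_real)
    moreover have "((\<lambda>s. (1::complex)) has_integral J m) {0..L}" using Jint[of m] by (simp add: w_def)
    ultimately show ?thesis using has_integral_unique by blast
  qed
  have wne: "\<bar>w n\<bar> > dl" if "n \<noteq> m" for n using sep[OF that] unfolding w_def .
  have Jb: "cmod (J n) \<le> 2 / \<bar>w n\<bar>" if "n \<noteq> m" for n
  proof -
    have wn: "w n \<noteq> 0" using wne[OF that] dl by auto
    have "J n = (exp (\<i> * complex_of_real (w n * L)) - 1) / (\<i> * complex_of_real (w n))"
      using has_integral_unique[OF Jint[of n] exp_integral[of L "w n"]] L wn by simp
    then show ?thesis using exp_integral_bound[OF wn] by simp
  qed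
  have B0: "B \<ge> 0" using Phi[of 0] L by (meson norm_ge_zero order_trans order_refl mult_pos_pos zero_less_numeral less_imp_le)
  have inner: "((\<lambda>s. \<Sum>n<N. a n * exp (\<i> * complex_of_real (w n * (s + t)))) has_integral
      (\<Sum>n<N. a n * exp (\<i> * complex_of_real (w n * t)) * J n)) {0..L}" for t
  proof (rule has_integral_sum)
    fix n assume "n \<in> {..<N}"
    have eq: "(\<lambda>s. a n * exp (\<i> * complex_of_real (w n * (s + t)))) =
      (\<lambda>s. (a n * exp (\<i> * complex_of_real (w n * t))) * exp (\<i> * complex_of_real (w n * s)))"
      by (rule ext) (simp add: exp_add[symmetric] algebra_simps)
    show "((\<lambda>s. a n * exp (\<i> * complex_of_real (w n * (s + t)))) has_integral
        a n * exp (\<i> * complex_of_real (w n * t)) * J n) {0..L}"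
      unfolding eq by (rule has_integral_mult_right[OF Jint])
  qed simp
  have innerb: "cmod (\<Sum>n<N. a n * exp (\<i> * complex_of_real (w n * t)) * J n) \<le> B * L"
    if "t \<in> {0..L}" for t
  proof -
    have "norm (\<Sum>n<N. a n * exp (\<i> * complex_of_real (w n * t)) * J n) \<le> B * Henstock_Kurzweil_Integration.content (cbox 0 L)"
    proof (rule has_integral_bound[OF B0])
      show "((\<lambda>s. \<Sum>n<N. a n * exp (\<i> * complex_of_real (w n * (s + t)))) has_integral
        (\<Sum>n<N. a n * exp (\<i> * complex_of_real (w n * t)) * J n)) (cbox 0 L)"
        using inner[of t] by simp
      fix s assume "s \<in> cbox 0 L"
      then have "0 \<le> s + t" "s + t \<le> 2 * L" using that by auto
      from Phi[OF this] show "norm (\<Sum>n<N. a n * exp (\<i> * complex_of_real (w n * (s + t)))) \<le> B"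
        unfolding w_def by simp
    qed
    then show ?thesis using L by simp
  qed
  have outer: "((\<lambda>t. \<Sum>n<N. a n * exp (\<i> * complex_of_real (w n * t)) * J n) has_integral
      (\<Sum>n<N. a n * J n * J n)) {0..L}"
  proof (rule has_integral_sum)
    fix n assume "n \<in> {..<N}"
    have eq: "(\<lambda>t. a n * exp (\<i> * complex_of_real (w n * t)) * J n) =
      (\<lambda>t. (a n * J n) * exp (\<i> * complex_of_real (w n * t)))"
      by (rule ext) (simp add: algebra_simps)
    show "((\<lambda>t. a n * exp (\<i> * complex_of_real (w n * t)) * J n) has_integral a n * J n * J n) {0..L}"
      unfolding eq by (rule has_integral_mult_right[OF Jint])
  qed simp
  have total: "cmod (\<Sum>n<N. a n * J n * J n) \<le> B * L * L"
  proof -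
    have "norm (\<Sum>n<N. a n * J n * J n) \<le> (B * L) * Henstock_Kurzweil_Integration.content (cbox 0 L)"
    proof (rule has_integral_bound)
      show "0 \<le> B * L" using B0 L by simp
      show "((\<lambda>t. \<Sum>n<N. a n * exp (\<i> * complex_of_real (w n * t)) * J n) has_integral
        (\<Sum>n<N. a n * J n * J n)) (cbox 0 L)" using outer by simp
      fix t assume "t \<in> cbox 0 L"
      then show "norm (\<Sum>n<N. a n * exp (\<i> * complex_of_real (w n * t)) * J n) \<le> B * L"
        using innerb by simp
    qed
    then show ?thesis using L by simp
  qed
  define F where "F = {..<N} - {m}"
  have split: "(\<Sum>n<N. a n * J n * J n) = a m * J m * J m + (\<Sum>n\<in>F. a n * J n * J n)"
    unfolding F_def using mN by (simp add: sum.remove)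
  have Fw: "n \<in> F \<Longrightarrow> \<bar>w n\<bar> > dl" for n unfolding F_def using wne by auto
  have wsep: "\<And>n n'. n \<noteq> n' \<Longrightarrow> \<bar>w n - w n'\<bar> \<ge> dl"
    unfolding w_def using sep by (simp add: less_imp_le)
  define Fp where "Fp = {n\<in>F. w n > 0}"
  define Fn where "Fn = {n\<in>F. w n < 0}"
  have finF: "finite F" unfolding F_def by simp
  have FU: "F = Fp \<union> Fn" unfolding Fp_def Fn_def using Fw dl by force
  have sp: "(\<Sum>n\<in>Fp. 1 / (w n)^2) \<le> 2 / dl^2"
  proof (rule sep_sum[OF dl])
    show "finite Fp" unfolding Fp_def using finF by simp
    show "\<And>n. n \<in> Fp \<Longrightarrow> dl \<le> w n" unfolding Fp_def using Fw by fastforce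
  qed (rule wsep)
  have sn: "(\<Sum>n\<in>Fn. 1 / (- w n)^2) \<le> 2 / dl^2"
  proof (rule sep_sum[OF dl])
    show "finite Fn" unfolding Fn_def using finF by simp
    show "\<And>n. n \<in> Fn \<Longrightarrow> dl \<le> - w n" unfolding Fn_def using Fw by fastforce
    show "\<And>n n'. n \<in> Fn \<Longrightarrow> n' \<in> Fn \<Longrightarrow> n \<noteq> n' \<Longrightarrow> dl \<le> \<bar>- w n - - w n'\<bar>"
      using wsep by (metis abs_minus_commute minus_diff_eq diff_minus_eq_add uminus_add_conv_diff)
  qed
  have s1: "(\<Sum>n\<in>F. 1 / (w n)^2) \<le> 4 / dl^2"
  proof -
    have "(\<Sum>n\<in>F. 1 / (w n)^2) = (\<Sum>n\<in>Fp. 1 / (w n)^2) + (\<Sum>n\<in>Fn. 1 / (w n)^2)"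
      unfolding FU by (rule sum.union_disjoint) (auto simp: Fp_def Fn_def intro: finite_subset[OF _ finF])
    then show ?thesis using sp sn by simp
  qed
  have A0: "A \<ge> 0" using A[of 0] by (meson norm_ge_zero order_trans)
  have rest: "cmod (\<Sum>n\<in>F. a n * J n * J n) \<le> 16 * A / dl^2"
  proof -
    have "cmod (\<Sum>n\<in>F. a n * J n * J n) \<le> (\<Sum>n\<in>F. cmod (a n * J n * J n))" by (rule norm_sum)
    also have "\<dots> \<le> (\<Sum>n\<in>F. A * 4 * (1 / (w n)^2))"
    proof (rule sum_mono)
      fix n assume nF: "n \<in> F"
      then have nm: "n \<noteq> m" unfolding F_def by simp
      have wp: "\<bar>w n\<bar> > 0" using Fw[OF nF] dl by simp
      have "cmod (J n) * cmod (J n) \<le> (2 / \<bar>w n\<bar>) * (2 / \<bar>w n\<bar>)"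
        using Jb[OF nm] by (intro mult_mono) auto
      also have "\<dots> = 4 * (1 / (w n)^2)" by (simp add: power2_eq_square)
      finally have jj: "cmod (J n) * cmod (J n) \<le> 4 * (1 / (w n)^2)" .
      have "cmod (a n * J n * J n) = cmod (a n) * (cmod (J n) * cmod (J n))" by (simp add: norm_mult)
      also have "\<dots> \<le> A * (4 * (1 / (w n)^2))" by (rule mult_mono[OF A[of n] jj A0]) simp
      finally show "cmod (a n * J n * J n) \<le> A * 4 * (1 / (w n)^2)" by simp
    qed
    also have "\<dots> = A * 4 * (\<Sum>n\<in>F. 1 / (w n)^2)" by (simp add: sum_distrib_left)
    also have "\<dots> \<le> A * 4 * (4 / dl^2)" using s1 A0 by (intro mult_left_mono) auto
    finally show ?thesis by simp
  qed
  have "cmod (a m) * L^2 = cmod (a m * J m * J m)" using Jm L by (simp add: norm_mult power2_eq_square)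
  also have "\<dots> \<le> cmod (\<Sum>n<N. a n * J n * J n) + cmod (\<Sum>n\<in>F. a n * J n * J n)"
    unfolding split by (metis add_diff_cancel_right' norm_triangle_ineq4)
  also have "\<dots> \<le> B * L * L + 16 * A / dl^2" using total rest by simp
  finally show ?thesis by (simp add: power2_eq_square mult.assoc)
qed



theorem theorem11:
  fixes sm :: "complex \<Rightarrow> 'a::banach \<Rightarrow> 'a"
    and S :: "(nat \<Rightarrow> complex) set" and N :: "(nat \<Rightarrow> complex) \<Rightarrow> real"
    and x :: "nat \<Rightarrow> 'a" and y :: "nat \<Rightarrow> 'a \<Rightarrow> complex"
    and lam :: "nat \<Rightarrow> real"
  assumes "cscalar sm"
    and "Xd_space S N"
    and "is_cross_frame sm S N x y"
    and "\<not> cbasis sm x"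
    and "\<exists>\<delta>>0. \<forall>n m. n \<noteq> m \<longrightarrow> \<bar>lam n - lam m\<bar> > \<delta>"
  shows "\<not> (\<exists>T. one_param_group sm T \<and>
                (\<forall>n t. T t (x n) = sm (exp (\<i> * complex_of_real (lam n * t))) (x n)))"
proof
  assume "\<exists>T. one_param_group sm T \<and>
                (\<forall>n t. T t (x n) = sm (exp (\<i> * complex_of_real (lam n * t))) (x n))"
  then obtain T where grp: "one_param_group sm T"
    and eig: "\<And>n t. T t (x n) = sm (exp (\<i> * complex_of_real (lam n * t))) (x n)" by blast
  note cs = assms(1)
  have Tbl: "\<And>t. bounded_linear (T t)" and Tsm: "\<And>t c z. T t (sm c z) = sm c (T t z)"
    and Tadd: "\<And>t s. T (t + s) = T t \<circ> T s" and T0: "T 0 = id"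
    using grp unfolding one_param_group_def cbounded_op_def by auto
  have xs: "\<And>z. (\<lambda>n. sm (y n z) (x n)) sums z" and xnz: "\<And>n. x n \<noteq> 0"
    and ycd: "\<And>n. cdual sm (y n)"
    using assms(3) unfolding is_cross_frame_def is_coframe_def is_frame_def by auto
  obtain dl where dl: "dl > 0" and sep: "\<And>n m. n \<noteq> m \<Longrightarrow> \<bar>lam n - lam m\<bar> > dl"
    using assms(5) by blast
  have Tsum: "T u (\<Sum>n<K. sm (c n) (x n)) = (\<Sum>n<K. sm (c n * exp (\<i> * complex_of_real (lam n * u))) (x n))"
    for u c K
  proof -
    have "T u (\<Sum>n<K. sm (c n) (x n)) = (\<Sum>n<K. T u (sm (c n) (x n)))"
      by (rule linear_sum[OF bounded_linear.linear[OF Tbl]])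
    also have "\<dots> = (\<Sum>n<K. sm (c n * exp (\<i> * complex_of_real (lam n * u))) (x n))"
      by (rule sum.cong) (auto simp: Tsm eig sm_mult[OF cs])
    finally show ?thesis .
  qed
  have Tcont: "continuous_on UNIV (\<lambda>u. T u (\<Sum>n<K. sm (c n) (x n)))" for c K
    unfolding Tsum
    by (intro continuous_on_sum cont_sm[OF cs] continuous_intros)
  define P where "P z K = (\<Sum>n<K. sm (y n z) (x n))" for z K
  define E where "E K = {u. \<forall>z Ka. norm (T u (P z Ka)) \<le> real K * norm (P z Ka)}" for K
  have Ecl: "closed (E K)" for K
  proof -
    have "E K = (\<Inter>z. \<Inter>Ka. {u. norm (T u (P z Ka)) \<le> real K * norm (P z Ka)})"
      unfolding E_def by auto
    moreover have "closed {u. norm (T u (P z Ka)) \<le> real K * norm (P z Ka)}" for z Ka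
      unfolding P_def
      by (intro closed_Collect_le continuous_on_norm Tcont continuous_on_const)
    ultimately show ?thesis by (simp only:) (intro closed_INT, blast)
  qed
  have Ecov: "\<exists>K. u \<in> E K" for u
  proof
    show "u \<in> E (nat \<lceil>onorm (T u)\<rceil>)" unfolding E_def
    proof (intro CollectI allI)
      fix z Ka
      have "norm (T u (P z Ka)) \<le> onorm (T u) * norm (P z Ka)" by (rule onorm[OF Tbl])
      also have "\<dots> \<le> real (nat \<lceil>onorm (T u)\<rceil>) * norm (P z Ka)"
        by (intro mult_right_mono real_nat_ceiling_ge) auto
      finally show "norm (T u (P z Ka)) \<le> real (nat \<lceil>onorm (T u)\<rceil>) * norm (P z Ka)" .
    qed
  qed
  obtain K c r where r: "r > 0" and bE: "ball c r \<subseteq> E K"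
    using baire_cover[OF Ecl Ecov] by blast
  have bd: "norm (T u z) \<le> real K * norm z" if "u \<in> ball c r" for u z
  proof -
    have Pz: "(\<lambda>Ka. P z Ka) \<longlonglongrightarrow> z" using xs[of z] unfolding sums_def P_def .
    have l1: "(\<lambda>Ka. real K * norm (P z Ka)) \<longlonglongrightarrow> real K * norm z"
      by (intro tendsto_intros Pz)
    have l2: "(\<lambda>Ka. norm (T u (P z Ka))) \<longlonglongrightarrow> norm (T u z)"
      by (intro tendsto_intros bounded_linear.tendsto[OF Tbl] Pz)
    have ev: "eventually (\<lambda>Ka. norm (T u (P z Ka)) \<le> real K * norm (P z Ka)) sequentially"
      using bE that unfolding E_def by auto
    show ?thesis by (rule tendsto_le[OF trivial_limit_sequentially l1 l2 ev])
  qed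
  obtain z where nu: "\<not> (\<exists>!c. (\<lambda>n. sm (c n) (x n)) sums z)"
    using assms(4) unfolding cbasis_def by blast
  obtain c2 where c2: "(\<lambda>n. sm (c2 n) (x n)) sums z" and c2ne: "c2 \<noteq> (\<lambda>n. y n z)"
  proof -
    have "\<exists>c2. (\<lambda>n. sm (c2 n) (x n)) sums z \<and> c2 \<noteq> (\<lambda>n. y n z)"
    proof (rule ccontr)
      assume H: "\<not> (\<exists>c2. (\<lambda>n. sm (c2 n) (x n)) sums z \<and> c2 \<noteq> (\<lambda>n. y n z))"
      have "\<exists>!c. (\<lambda>n. sm (c n) (x n)) sums z"
      proof (rule ex1I[of _ "\<lambda>n. y n z"])
        show "(\<lambda>n. sm (y n z) (x n)) sums z" by (rule xs)
        fix c assume "(\<lambda>n. sm (c n) (x n)) sums z"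
        then show "c = (\<lambda>n. y n z)" using H by blast
      qed
      with nu show False by blast
    qed
    then show thesis using that by blast
  qed
  define d where "d n = y n z - c2 n" for n
  have dsum: "(\<lambda>n. sm (d n) (x n)) sums 0"
  proof -
    have "(\<lambda>n. sm (y n z) (x n) - sm (c2 n) (x n)) sums (z - z)"
      by (rule sums_diff[OF xs c2])
    then show ?thesis unfolding d_def by (simp add: sm_diffl[OF cs])
  qed
  obtain m where dm: "d m \<noteq> 0"
    using c2ne unfolding d_def by (metis ext eq_iff_diff_eq_0)
  obtain k where ykm: "y k (x m) \<noteq> 0"
  proof (rule ccontr)
    assume "\<not> thesis"
    then have "\<And>n. y n (x m) = 0" using that by blast
    then have "(\<lambda>n. sm (y n (x m)) (x n)) = (\<lambda>n. 0)" by (simp add: sm_zero_left[OF cs])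
    then have "(\<lambda>n. 0) sums x m" using xs[of "x m"] by simp
    then have "x m = 0" using sums_zero sums_unique2 by blast
    with xnz show False by blast
  qed
  define f where "f = y k"
  have fbl: "bounded_linear f" and fsm: "\<And>c v. f (sm c v) = c * f v"
    using ycd[of k] unfolding f_def cdual_def by auto
  define Bf where "Bf = onorm f"
  have Bf0: "Bf \<ge> 0" unfolding Bf_def by (rule onorm_pos_le[OF fbl])
  have fb: "cmod (f v) \<le> Bf * norm v" for v unfolding Bf_def using onorm[OF fbl] by simp
  define a where "a n = d n * f (x n)" for n
  have afx: "a n = f (sm (d n) (x n))" for n unfolding a_def by (simp add: fsm)
  have "(\<lambda>n. sm (d n) (x n)) \<longlonglongrightarrow> 0"
    using dsum by (intro summable_LIMSEQ_zero) (auto simp: sums_iff)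
  then have "Bseq (\<lambda>n. sm (d n) (x n))" by (intro convergent_imp_Bseq convergentI)
  then obtain A0 where A0: "A0 > 0" "\<And>n. norm (sm (d n) (x n)) \<le> A0" by (auto elim: BseqE)
  define A where "A = Bf * A0"
  have Ab: "cmod (a n) \<le> A" for n
    unfolding afx A_def using fb[of "sm (d n) (x n)"] A0(2)[of n] Bf0
    by (meson mult_left_mono order_trans)
  define s where "s K = (\<Sum>n<K. sm (d n) (x n))" for K
  have s0: "s \<longlonglongrightarrow> 0" using dsum unfolding sums_def s_def .
  have key: "cmod (a m) * L^2 \<le> 16 * A / dl^2" if L: "L > 0" for L
  proof -
    obtain M where M: "\<And>u z. \<bar>u\<bar> \<le> 2 * L \<Longrightarrow> norm (T u z) \<le> M * norm z"
      using local_bound[where L="2 * L" and K="real K" and c=c and r=r and T=T, OF Tadd T0 Tbl r bd] by blast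
    have ineq: "cmod (a m) * L^2 \<le> Bf * M * norm (s Ka) * L^2 + 16 * A / dl^2" if "m < Ka" for Ka
    proof (rule core[OF L dl sep Ab that])
      fix u :: real assume u: "0 \<le> u" "u \<le> 2 * L"
      have "(\<Sum>n<Ka. a n * exp (\<i> * complex_of_real ((lam n - lam m) * u))) =
          exp (\<i> * complex_of_real (- (lam m * u))) * f (T u (s Ka))"
      proof -
        have "f (T u (s Ka)) = (\<Sum>n<Ka. d n * exp (\<i> * complex_of_real (lam n * u)) * f (x n))"
          unfolding s_def Tsum linear_sum[OF bounded_linear.linear[OF fbl]] by (simp add: fsm)
        then have "exp (\<i> * complex_of_real (- (lam m * u))) * f (T u (s Ka)) =
          (\<Sum>n<Ka. d n * f (x n) * (exp (\<i> * complex_of_real (lam n * u)) *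
               exp (\<i> * complex_of_real (- (lam m * u)))))"
          by (simp add: sum_distrib_left algebra_simps)
        also have "\<dots> = (\<Sum>n<Ka. a n * exp (\<i> * complex_of_real ((lam n - lam m) * u)))"
          unfolding a_def by (rule sum.cong) (auto simp: exp_add[symmetric] algebra_simps)
        finally show ?thesis by simp
      qed
      then have "cmod (\<Sum>n<Ka. a n * exp (\<i> * complex_of_real ((lam n - lam m) * u))) =
          cmod (f (T u (s Ka)))" by (simp add: norm_mult)
      also have "\<dots> \<le> Bf * norm (T u (s Ka))" by (rule fb)
      also have "\<dots> \<le> Bf * (M * norm (s Ka))" using M[of u "s Ka"] u Bf0
        by (intro mult_left_mono) auto
      finally show "cmod (\<Sum>n<Ka. a n * exp (\<i> * complex_of_real ((lam n - lam m) * u)))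
          \<le> Bf * M * norm (s Ka)" by (simp add: mult.assoc)
    qed
    have lim: "(\<lambda>Ka. Bf * M * norm (s Ka) * L^2 + 16 * A / dl^2) \<longlonglongrightarrow> Bf * M * 0 * L^2 + 16 * A / dl^2"
      by (intro tendsto_intros tendsto_norm_zero s0)
    have ev: "eventually (\<lambda>Ka. cmod (a m) * L^2 \<le> Bf * M * norm (s Ka) * L^2 + 16 * A / dl^2) sequentially"
      using eventually_gt_at_top[of m] by eventually_elim (rule ineq)
    show ?thesis using tendsto_le[OF trivial_limit_sequentially lim tendsto_const ev] by simp
  qed
  have "a m = 0"
  proof (rule ccontr)
    assume "a m \<noteq> 0"
    then have cpos: "cmod (a m) > 0" by simp
    have A0': "A \<ge> 0" using Ab[of 0] by (meson norm_ge_zero order_trans)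
    define L where "L = 1 + 16 * A / dl^2 / cmod (a m)"
    have L1: "L \<ge> 1" unfolding L_def using A0' dl cpos by simp
    have "cmod (a m) * L \<le> cmod (a m) * L^2"
      using L1 cpos by (intro mult_left_mono) (auto simp: power2_eq_square)
    also have "\<dots> \<le> 16 * A / dl^2" using key L1 by simp
    finally have "cmod (a m) * L \<le> 16 * A / dl^2" .
    moreover have "cmod (a m) * L = cmod (a m) + 16 * A / dl^2"
      unfolding L_def using cpos by (simp add: field_simps)
    ultimately show False using cpos by simp
  qed
  then show False using dm ykm unfolding a_def f_def by simp
qed

end
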